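(* Let $k_1,k_2\ge2$ with $k_1+k_2$ even, and let $a=(u_1,u_2)$ be a CLT pair where $u_1,u_2$ are closed words with first letter $1$, without self edges, of lengths $k_1$ and $k_2$. Then either $\mathrm{wt}(a)=1+\#E_a$ or $\mathrm{wt}(a)=\#E_a$. Moreover: (i) if $\mathrm{wt}(a)=1+\#E_a$, then the graph $G_a$ is a tree, $N_e^{u_i}=2$ for all $e\in E_{u_i}$ ($i=1,2$), and $N_e^a=2$ for all $e\in E_a$ except exactly one edge $e_0$, for which $N_{e_0}^a=4$; (ii) if $\mathrm{wt}(a)=\#E_a$, then for each $i=1,2$ there is an edge $e\in E_a$ with $N_e^{u_i}=1$, and $N_e^a=2$ for all $e\in E_a$.
   Context: A word is a finite sequence $w=(s_1,\dots,s_m)$ of positive integers; $\ell(w)=m$; closed means $s_1=s_m$. $\mathrm{supp}(w)$ is its set of letters. Its graph $G_w$ has vertices $\mathrm{supp}(w)$ and undirected edges $E_w=\{\{s_i,s_{i+1}\}:1\le i\le m-1\}$; a self edge is one of form $\{u,u\}$. $N_e^w=\#\{i\le m-1:\{s_i,s_{i+1}\}=e\}$. For $a=(w_1,w_2)$: $\mathrm{wt}(a)=\#(\mathrm{supp}(w_1)\cup\mathrm{supp}(w_2))$, $G_a$ has vertices $\mathrm{supp}(w_1)\cup\mathrm{supp}(w_2)$ and edges $E_a=E_{w_1}\cup E_{w_2}$, $N_e^a=N_e^{w_1}+N_e^{w_2}$. $(w_1,w_2)$ is a CLT pair if $N_e^a\ge2$ for all $e\in E_a$, $E_{w_1}\cap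 E_{w_2}\neq\emptyset$, and $\mathrm{wt}(a)=\frac{\ell(w_1)+\ell(w_2)}{2}-1$. *)

theory Defs
  imports Main
begin

text \<open>Words are lists of positive integers (nat list with all letters > 0).
  Undirected edges are represented as sets {u,v} (a singleton {u} is a self edge).\<close>

type_synonym word = "nat list"

definition is_word :: "word \<Rightarrow> bool" where
  "is_word w \<longleftrightarrow> (\<forall>s\<in>set w. 0 < s)"

definition closed_word :: "word \<Rightarrow> bool" where
  "closed_word w \<longleftrightarrow> w \<noteq> [] \<and> hd w = last w"

definition supp :: "word \<Rightarrow> nat set" where
  "supp w = set w"

definition edges :: "word \<Rightarrow> nat set set" where
  "edges w = {{w ! i, w ! (i+1)} | i. i + 1 < length w}"

definition no_self_edges :: "word \<Rightarrow> bool" where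
  "no_self_edges w \<longleftrightarrow> (\<forall>i. i + 1 < length w \<longrightarrow> w ! i \<noteq> w ! (i+1))"

definition Ncount :: "word \<Rightarrow> nat set \<Rightarrow> nat" where
  "Ncount w e = card {i. i + 1 < length w \<and> {w ! i, w ! (i+1)} = e}"

definition wt_pair :: "word \<Rightarrow> word \<Rightarrow> nat" where
  "wt_pair w1 w2 = card (supp w1 \<union> supp w2)"

definition verts_pair :: "word \<Rightarrow> word \<Rightarrow> nat set" where
  "verts_pair w1 w2 = supp w1 \<union> supp w2"

definition edges_pair :: "word \<Rightarrow> word \<Rightarrow> nat set set" where
  "edges_pair w1 w2 = edges w1 \<union> edges w2"

definition Ncount_pair :: "word \<Rightarrow> word \<Rightarrow> nat set \<Rightarrow> nat" where
  "Ncount_pair w1 w2 e = Ncount w1 e + Ncount w2 e"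

definition CLT_pair :: "word \<Rightarrow> word \<Rightarrow> bool" where
  "CLT_pair w1 w2 \<longleftrightarrow>
     (\<forall>e\<in>edges_pair w1 w2. Ncount_pair w1 w2 e \<ge> 2) \<and>
     edges w1 \<inter> edges w2 \<noteq> {} \<and>
     2 * wt_pair w1 w2 + 2 = length w1 + length w2"

definition graph_connected :: "nat set \<Rightarrow> nat set set \<Rightarrow> bool" where
  "graph_connected V E \<longleftrightarrow>
     (\<forall>u\<in>V. \<forall>v\<in>V. (u, v) \<in> ({(x, y). {x, y} \<in> E})\<^sup>*)"

definition has_cycle :: "nat set \<Rightarrow> nat set set \<Rightarrow> bool" where
  "has_cycle V E \<longleftrightarrow>
     (\<exists>vs. length vs \<ge> 3 \<and> distinct vs \<and> set vs \<subseteq> V \<and>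
        (\<forall>i<length vs. {vs ! i, vs ! ((i + 1) mod length vs)} \<in> E))"

definition is_tree :: "nat set \<Rightarrow> nat set set \<Rightarrow> bool" where
  "is_tree V E \<longleftrightarrow> V \<noteq> {} \<and> graph_connected V E \<and> \<not> has_cycle V E"

end

theory Submission
  imports Defs
begin

definition Rel :: "nat set set \<Rightarrow> (nat \<times> nat) set" where
  "Rel E = {(x,y). {x,y} \<in> E}"

lemma Rel_sym: "(x,y) \<in> Rel E \<Longrightarrow> (y,x) \<in> Rel E"
  by (simp add: Rel_def insert_commute)

lemma Rel_rt_sym: "(a,b) \<in> (Rel E)\<^sup>* \<Longrightarrow> (b,a) \<in> (Rel E)\<^sup>*"
  by (induction rule: rtrancl_induct) (auto intro: converse_rtrancl_into_rtrancl Rel_sym)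

lemma Rel_mono: "A \<subseteq> B \<Longrightarrow> Rel A \<subseteq> Rel B"
  by (auto simp: Rel_def)

lemma escape: "(a,b) \<in> (Rel E)\<^sup>* \<Longrightarrow> a \<in> S \<Longrightarrow> b \<notin> S \<Longrightarrow> \<exists>x y. x\<in>S \<and> y\<notin>S \<and> {x,y}\<in>E"
proof (induction rule: rtrancl_induct)
  case base then show ?case by simp
next
  case (step b c)
  show ?case
  proof (cases "b \<in> S")
    case True then show ?thesis using step by (auto simp: Rel_def)
  next
    case False then show ?thesis using step by auto
  qed
qed

lemma G_aux:
  assumes "finite V" "\<forall>e\<in>E. e \<subseteq> V" "\<forall>v\<in>V. (v0,v) \<in> (Rel E)\<^sup>*"
  shows "\<forall>S F. S \<subseteq> V \<longrightarrow> v0 \<in> S \<longrightarrow> F \<subseteq> E \<longrightarrow> (\<forall>e\<in>F. e \<subseteq> S) \<longrightarrow> card S \<le> card F + 1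
     \<longrightarrow> card (V - S) = n \<longrightarrow> card V \<le> card E + 1"
proof (induction n)
  have finE: "finite E" using assms(1,2) by (meson Pow_iff finite_Pow_iff finite_subset subsetI)
  case 0
  show ?case
  proof (intro allI impI)
    fix S F assume a: "S \<subseteq> V" "v0\<in>S" "F\<subseteq>E" "\<forall>e\<in>F. e\<subseteq>S" "card S \<le> card F + 1" "card (V-S) = 0"
    have "S = V" using a assms(1) by (metis Diff_eq_empty_iff card_0_eq finite_Diff subset_antisym)
    moreover have "card F \<le> card E" using card_mono[OF finE a(3)] .
    ultimately show "card V \<le> card E + 1" using a(5) by simp
  qed
next
  have finE: "finite E" using assms(1,2) by (meson Pow_iff finite_Pow_iff finite_subset subsetI)
  case (Suc n)
  show ?case
  proof (intro allI impI)
    fix S F assume a: "S \<subseteq> V" "v0\<in>S" "F\<subseteq>E" "\<forall>e\<in>F. e\<subseteq>S" "card S \<le> card F + 1" "card (V-S) = Suc n"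
    then obtain v where v: "v \<in> V" "v \<notin> S"
      by (metis Diff_iff card_0_eq empty_iff finite_Diff assms(1) nat.simps(3) subsetI subset_antisym)
    then have "(v0,v) \<in> (Rel E)\<^sup>*" using assms(3) by blast
    then obtain x y where xy: "x\<in>S" "y\<notin>S" "{x,y}\<in>E" using escape a(2) v(2) by blast
    have yV: "y \<in> V" using assms(2) xy(3) by auto
    have nF: "{x,y} \<notin> F" using a(4) xy(2) by auto
    have finS: "finite S" using a(1) assms(1) finite_subset by blast
    have finF: "finite F" using a(3) finE finite_subset by blast
    have c1: "card (insert y S) = card S + 1" using finS xy(2) by simp
    have c2: "card (insert {x,y} F) = card F + 1" using finF nF by simp
    have c3: "card (V - insert y S) = n"
    proof -
      have "V - insert y S = (V - S) - {y}" by auto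
      moreover have "y \<in> V - S" using yV xy(2) by auto
      ultimately show ?thesis using a(6) assms(1) by simp
    qed
    show "card V \<le> card E + 1"
      using Suc.IH[rule_format, of "insert y S" "insert {x,y} F"] a yV xy c1 c2 c3 by auto
  qed
qed

lemma G:
  assumes "finite V" "\<forall>e\<in>E. e \<subseteq> V" "v0 \<in> V" "\<forall>v\<in>V. (v0,v) \<in> (Rel E)\<^sup>*"
  shows "card V \<le> card E + 1"
  using G_aux[OF assms(1,2,4), rule_format, of "{v0}" "{}" "card (V - {v0})"] assms(3) by auto

lemma K:
  assumes "finite V" "\<forall>e\<in>E. e \<subseteq> V" "v0\<in>V" "\<forall>v\<in>V. (v0,v)\<in>(Rel E)\<^sup>*"
    "card V = card E + 1" "{p,q} \<in> E"
  shows "(q,p) \<notin> (Rel (E - {{p,q}}))\<^sup>*"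
proof
  assume h: "(q,p) \<in> (Rel (E - {{p,q}}))\<^sup>*"
  let ?R = "Rel (E - {{p,q}})"
  have h2: "(p,q) \<in> ?R\<^sup>*" using Rel_rt_sym h by blast
  have sub: "Rel E \<subseteq> ?R\<^sup>*"
  proof
    fix z assume "z \<in> Rel E"
    then obtain x y where z: "z=(x,y)" "{x,y}\<in>E" by (auto simp: Rel_def)
    show "z\<in>?R\<^sup>*"
    proof (cases "{x,y} = {p,q}")
      case True then have "(x=p\<and>y=q) \<or> (x=q\<and>y=p)" by (simp add: doubleton_eq_iff)
      then show ?thesis using h h2 z by auto
    next
      case False then have "(x,y)\<in>?R" using z by (simp add: Rel_def)
      thus ?thesis using z by auto
    qed
  qed
  have "\<forall>v\<in>V. (v0,v) \<in> ?R\<^sup>*" using assms(4) rtrancl_subset_rtrancl[OF sub] by auto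
  then have "card V \<le> card (E - {{p,q}}) + 1" using G[of V "E - {{p,q}}" v0] assms by auto
  moreover have "finite E" using assms(1,2) by (meson Pow_iff finite_Pow_iff finite_subset subsetI)
  moreover have "card (E - {{p,q}}) = card E - 1" using \<open>finite E\<close> assms(6) by simp
  moreover have "card E \<ge> 1" using \<open>finite E\<close> assms(6) by (metis One_nat_def Suc_leI card_gt_0_iff empty_iff)
  ultimately show False using assms(5) by linarith
qed

fun cnt :: "word \<Rightarrow> nat set \<Rightarrow> nat" where
  "cnt (x#y#r) e = (if {x,y}=e then 1 else 0) + cnt (y#r) e"
| "cnt _ e = 0"

lemma edges_Cons2: "edges (x#y#r) = insert {x,y} (edges (y#r))"
proof -
  have "edges (x#y#r) \<subseteq> insert {x,y} (edges (y#r))"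
  proof
    fix e assume "e \<in> edges (x#y#r)"
    then obtain i where i: "i+1 < length (x#y#r)" "e = {(x#y#r)!i, (x#y#r)!(i+1)}" unfolding edges_def by blast
    show "e \<in> insert {x,y} (edges (y#r))"
    proof (cases i)
      case 0 then show ?thesis using i by simp
    next
      case (Suc j) then have "j+1 < length (y#r)" "e = {(y#r)!j, (y#r)!(j+1)}" using i by auto
      then show ?thesis unfolding edges_def by blast
    qed
  qed
  moreover have "insert {x,y} (edges (y#r)) \<subseteq> edges (x#y#r)"
  proof -
    have "{x,y} \<in> edges (x#y#r)" unfolding edges_def by force
    moreover have "edges (y#r) \<subseteq> edges (x#y#r)"
    proof
      fix e assume "e \<in> edges (y#r)"
      then obtain i where "i+1 < length (y#r)" "e = {(y#r)!i, (y#r)!(i+1)}" unfolding edges_def by blast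
      then show "e \<in> edges (x#y#r)" unfolding edges_def
        by (intro CollectI exI[of _ "Suc i"]) auto
    qed
    ultimately show ?thesis by blast
  qed
  ultimately show ?thesis by blast
qed

lemma edges_short: "length w < 2 \<Longrightarrow> edges w = {}"
  unfolding edges_def by auto

lemma Ncount_cnt: "Ncount w e = cnt w e"
proof (induction w rule: induct_list012)
  case 1 then show ?case by (simp add: Ncount_def)
next
  case (2 x) then show ?case by (simp add: Ncount_def)
next
  case (3 x y r)
  let ?A = "{i. i + 1 < length (y#r) \<and> {(y#r) ! i, (y#r) ! (i+1)} = e}"
  have eq: "{i. i + 1 < length (x#y#r) \<and> {(x#y#r) ! i, (x#y#r) ! (i+1)} = e}
      = {i. i = 0 \<and> {x,y} = e} \<union> Suc ` ?A"
    apply (rule set_eqI)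
    apply (case_tac xa)
     apply auto
    done
  have f1: "finite {i::nat. i = 0 \<and> {x,y} = e}" by auto
  have "?A \<subseteq> {..<length (y#r)}" by auto
  then have f2: "finite (Suc ` ?A)" using finite_subset by blast
  have d: "{i::nat. i = 0 \<and> {x,y} = e} \<inter> Suc ` ?A = {}" by auto
  have "card ({i::nat. i = 0 \<and> {x,y} = e} \<union> Suc ` ?A) = card {i::nat. i = 0 \<and> {x,y} = e} + card (Suc ` ?A)"
    using card_Un_disjoint[OF f1 f2 d] .
  moreover have "card (Suc ` ?A) = card ?A" by (simp add: card_image)
  moreover have "card {i::nat. i = 0 \<and> {x,y} = e} = (if {x,y} = e then 1 else 0)" by auto
  ultimately show ?case using 3 eq unfolding Ncount_def by simp
qed

lemma cnt_sum: "finite A \<Longrightarrow> edges w \<subseteq> A \<Longrightarrow> (\<Sum>e\<in>A. cnt w e) = length w - 1"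
proof (induction w rule: induct_list012)
  case 1 then show ?case by simp
next
  case (2 x) then show ?case by simp
next
  case (3 x y r)
  have "(\<Sum>e\<in>A. cnt (x#y#r) e) = (\<Sum>e\<in>A. (if {x,y}=e then 1 else 0)) + (\<Sum>e\<in>A. cnt (y#r) e)"
    by (simp add: sum.distrib)
  also have "\<dots> = 1 + (length (y#r) - 1)" using 3 by (simp add: edges_Cons2)
  finally show ?case by simp
qed

lemma cnt_pos: "e \<in> edges w \<Longrightarrow> cnt w e \<ge> 1"
  by (induction w rule: induct_list012) (auto simp: edges_Cons2 edges_short)

lemma cnt_zero: "e \<notin> edges w \<Longrightarrow> cnt w e = 0"
  by (induction w rule: induct_list012) (auto simp: edges_Cons2)

lemma parity:
  assumes "\<forall>v w. v \<in> C \<longrightarrow> {v,w} \<in> E - {{p,q}} \<longrightarrow> w \<in> C" "q \<in> C" "p \<notin> C"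
  shows "edges w \<subseteq> E \<Longrightarrow> w \<noteq> [] \<Longrightarrow> (even (cnt w {p,q}) \<longleftrightarrow> (hd w \<in> C \<longleftrightarrow> last w \<in> C))"
proof (induction w rule: induct_list012)
  case 1 then show ?case by simp
next
  case (2 x) then show ?case by simp
next
  case (3 x y r)
  have xy: "{x,y} \<in> E" and sub: "edges (y#r) \<subseteq> E" using 3(3) by (auto simp: edges_Cons2)
  have IH: "even (cnt (y#r) {p,q}) \<longleftrightarrow> (y \<in> C \<longleftrightarrow> last (y#r) \<in> C)" using 3(2) sub by simp
  show ?case
  proof (cases "{x,y} = {p,q}")
    case True
    then have "(x=p\<and>y=q) \<or> (x=q\<and>y=p)" by (simp add: doubleton_eq_iff)
    then have "x \<in> C \<longleftrightarrow> y \<notin> C" using assms(2,3) by auto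
    then show ?thesis using IH True by auto
  next
    case False
    have "{x,y} \<in> E - {{p,q}}" "{y,x} \<in> E - {{p,q}}" using xy False by (auto simp: insert_commute)
    then have "x \<in> C \<longleftrightarrow> y \<in> C" using assms(1) by blast
    then show ?thesis using IH False by auto
  qed
qed

lemma walk_conn: "w \<noteq> [] \<Longrightarrow> v \<in> set w \<Longrightarrow> (hd w, v) \<in> (Rel (edges w))\<^sup>*"
proof (induction w rule: induct_list012)
  case 1 then show ?case by simp
next
  case (2 x) then show ?case by simp
next
  case (3 x y r)
  show ?case
  proof (cases "v = x")
    case True then show ?thesis by simp
  next
    case False
    then have "(y,v) \<in> (Rel (edges (y#r)))\<^sup>*" using 3 by simp
    moreover have "Rel (edges (y#r)) \<subseteq> Rel (edges (x#y#r))" by (rule Rel_mono) (auto simp: edges_Cons2)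
    ultimately have "(y,v) \<in> (Rel (edges (x#y#r)))\<^sup>*" using rtrancl_mono by blast
    moreover have "(x,y) \<in> Rel (edges (x#y#r))" by (simp add: Rel_def edges_Cons2)
    ultimately show ?thesis by (simp add: converse_rtrancl_into_rtrancl)
  qed
qed

lemma edge_sub: "e \<in> edges w \<Longrightarrow> e \<subseteq> set w"
  unfolding edges_def by auto

lemma edge_form: "e \<in> edges w \<Longrightarrow> no_self_edges w \<Longrightarrow> \<exists>p q. p \<noteq> q \<and> e = {p,q}"
  unfolding edges_def no_self_edges_def by auto


lemma sum_ge_eq:
  fixes f g :: "'a \<Rightarrow> nat"
  assumes "finite A" "\<forall>x\<in>A. g x \<le> f x" "sum f A \<le> sum g A" "x \<in> A"
  shows "f x = g x"
proof (rule ccontr)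
  assume "f x \<noteq> g x"
  then have lt: "g x < f x" using assms(2,4) by force
  have "sum g (A - {x}) \<le> sum f (A - {x})" using assms(2) by (intro sum_mono) auto
  moreover have "sum f A = f x + sum f (A - {x})" using assms(1,4) by (simp add: sum.remove)
  moreover have "sum g A = g x + sum g (A - {x})" using assms(1,4) by (simp add: sum.remove)
  ultimately show False using lt assms(3) by linarith
qed

theorem mainTheorem3:
  fixes k1 k2 :: nat and u1 u2 :: word
  assumes "k1 \<ge> 2" and "k2 \<ge> 2" and "even (k1 + k2)"
    and "is_word u1" and "is_word u2"
    and "closed_word u1" and "closed_word u2"
    and "hd u1 = 1" and "hd u2 = 1"
    and "no_self_edges u1" and "no_self_edges u2"
    and "length u1 = k1" and "length u2 = k2"
    and "CLT_pair u1 u2"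
  shows "(wt_pair u1 u2 = 1 + card (edges_pair u1 u2) \<or> wt_pair u1 u2 = card (edges_pair u1 u2))
    \<and> (wt_pair u1 u2 = 1 + card (edges_pair u1 u2) \<longrightarrow>
         is_tree (verts_pair u1 u2) (edges_pair u1 u2)
         \<and> (\<forall>e\<in>edges u1. Ncount u1 e = 2)
         \<and> (\<forall>e\<in>edges u2. Ncount u2 e = 2)
         \<and> (\<exists>!e0. e0 \<in> edges_pair u1 u2 \<and> Ncount_pair u1 u2 e0 \<noteq> 2)
         \<and> (\<forall>e0\<in>edges_pair u1 u2. Ncount_pair u1 u2 e0 \<noteq> 2 \<longrightarrow> Ncount_pair u1 u2 e0 = 4))
    \<and> (wt_pair u1 u2 = card (edges_pair u1 u2) \<longrightarrow>
         (\<exists>e\<in>edges_pair u1 u2. Ncount u1 e = 1)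
         \<and> (\<exists>e\<in>edges_pair u1 u2. Ncount u2 e = 1)
         \<and> (\<forall>e\<in>edges_pair u1 u2. Ncount_pair u1 u2 e = 2))"
proof -
  let ?V = "verts_pair u1 u2" and ?E = "edges_pair u1 u2"
  have ne1: "u1 \<noteq> []" and ne2: "u2 \<noteq> []" using assms(6,7) by (auto simp: closed_word_def)
  have hl1: "hd u1 = last u1" and hl2: "hd u2 = last u2" using assms(6,7) by (auto simp: closed_word_def)
  have finV: "finite ?V" by (simp add: verts_pair_def supp_def)
  have oneV: "1 \<in> ?V" using ne1 assms(8) by (metis UnI1 hd_in_set supp_def verts_pair_def)
  have esub: "\<forall>e\<in>?E. e \<subseteq> ?V" using edge_sub by (auto simp: edges_pair_def verts_pair_def supp_def)
  have finE: "finite ?E" using finV esub by (meson Pow_iff finite_Pow_iff finite_subset subsetI)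
  have E1: "edges u1 \<subseteq> ?E" and E2: "edges u2 \<subseteq> ?E" by (auto simp: edges_pair_def)
  have conn: "\<forall>v\<in>?V. (1,v) \<in> (Rel ?E)\<^sup>*"
  proof
    fix v assume "v \<in> ?V"
    then have "v \<in> set u1 \<or> v \<in> set u2" by (simp add: verts_pair_def supp_def)
    then show "(1,v) \<in> (Rel ?E)\<^sup>*"
    proof
      assume "v \<in> set u1"
      then have "(1,v) \<in> (Rel (edges u1))\<^sup>*" using walk_conn[OF ne1] assms(8) by metis
      then show ?thesis using rtrancl_mono[OF Rel_mono[OF E1]] by blast
    next
      assume "v \<in> set u2"
      then have "(1,v) \<in> (Rel (edges u2))\<^sup>*" using walk_conn[OF ne2] assms(9) by metis
      then show ?thesis using rtrancl_mono[OF Rel_mono[OF E2]] by blast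
    qed
  qed
  have wt: "wt_pair u1 u2 = card ?V" by (simp add: wt_pair_def verts_pair_def)
  have NP: "\<And>e. Ncount_pair u1 u2 e = cnt u1 e + cnt u2 e" by (simp add: Ncount_pair_def Ncount_cnt)
  have NC: "\<And>w e. Ncount w e = cnt w e" by (simp add: Ncount_cnt)
  have ge2: "\<forall>e\<in>?E. cnt u1 e + cnt u2 e \<ge> 2" using assms(14) NP by (simp add: CLT_pair_def)
  obtain c where c1: "c \<in> edges u1" and c2: "c \<in> edges u2" using assms(14) by (auto simp: CLT_pair_def)
  have len: "2 * card ?V + 2 = k1 + k2" using assms(12,13,14) wt by (simp add: CLT_pair_def)
  have sumN: "(\<Sum>e\<in>?E. cnt u1 e + cnt u2 e) = 2 * card ?V"
    using cnt_sum[OF finE E1] cnt_sum[OF finE E2] assms(1,2,12,13) len by (simp add: sum.distrib)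
  have "(\<Sum>e\<in>?E. (2::nat)) \<le> (\<Sum>e\<in>?E. cnt u1 e + cnt u2 e)" using ge2 by (intro sum_mono) auto
  then have le1: "card ?E \<le> card ?V" using sumN by simp
  have le2: "card ?V \<le> card ?E + 1" using G[OF finV esub oneV conn] .
  have cE: "c \<in> ?E" using c1 E1 by auto
  have caseA: "card ?V = card ?E \<Longrightarrow> (\<exists>e\<in>?E. cnt u1 e = 1) \<and> (\<exists>e\<in>?E. cnt u2 e = 1) \<and> (\<forall>e\<in>?E. cnt u1 e + cnt u2 e = 2)"
  proof -
    assume h: "card ?V = card ?E"
    have all2: "\<forall>e\<in>?E. cnt u1 e + cnt u2 e = 2"
    proof
      fix e assume "e \<in> ?E"
      then show "cnt u1 e + cnt u2 e = 2"
        using sum_ge_eq[OF finE, of "\<lambda>_. 2" "\<lambda>e. cnt u1 e + cnt u2 e"] ge2 sumN h by simp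
    qed
    have "cnt u1 c \<ge> 1" "cnt u2 c \<ge> 1" using cnt_pos c1 c2 by auto
    then have "cnt u1 c = 1" "cnt u2 c = 1" using all2 cE by fastforce+
    then show ?thesis using all2 cE by blast
  qed
  have caseB: "card ?V = card ?E + 1 \<Longrightarrow> is_tree ?V ?E \<and> (\<forall>e\<in>edges u1. cnt u1 e = 2) \<and> (\<forall>e\<in>edges u2. cnt u2 e = 2)
      \<and> (\<forall>e\<in>?E. cnt u1 e + cnt u2 e = (if e = c then 4 else 2))"
  proof -
    assume h: "card ?V = card ?E + 1"
    have Kf: "\<And>p q. {p,q} \<in> ?E \<Longrightarrow> (q,p) \<notin> (Rel (?E - {{p,q}}))\<^sup>*"
      using K[OF finV esub oneV conn h] by blast
    have conn2: "graph_connected ?V ?E"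
      unfolding graph_connected_def
    proof (intro ballI)
      fix u v assume "u \<in> ?V" "v \<in> ?V"
      then have "(u,1) \<in> (Rel ?E)\<^sup>*" "(1,v) \<in> (Rel ?E)\<^sup>*" using conn Rel_rt_sym by blast+
      then have "(u,v) \<in> (Rel ?E)\<^sup>*" by (rule rtrancl_trans)
      then show "(u, v) \<in> {(x, y). {x, y} \<in> ?E}\<^sup>*" by (simp add: Rel_def)
    qed
    have nocyc: "\<not> has_cycle ?V ?E"
    proof
      assume "has_cycle ?V ?E"
      then obtain vs where vs: "length vs \<ge> 3" "distinct vs"
        "\<forall>i<length vs. {vs ! i, vs ! ((i + 1) mod length vs)} \<in> ?E"
        unfolding has_cycle_def by blast
      let ?n = "length vs" and ?a = "vs!0" and ?b = "vs!1"
      let ?R = "Rel (?E - {{?a,?b}})"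
      have vne: "vs \<noteq> []" using vs(1) by auto
      have ab: "{?a,?b} \<in> ?E" using vs(1) vs(3)[rule_format, of 0] vne by simp
      have dist: "\<And>i j. i < ?n \<Longrightarrow> j < ?n \<Longrightarrow> vs!i = vs!j \<Longrightarrow> i = j"
        using vs(2) nth_eq_iff_index_eq by blast
      have path: "\<And>j. 1 \<le> j \<Longrightarrow> j < ?n \<Longrightarrow> (?b, vs!j) \<in> ?R\<^sup>*"
      proof -
        fix j show "1 \<le> j \<Longrightarrow> j < ?n \<Longrightarrow> (?b, vs!j) \<in> ?R\<^sup>*"
        proof (induction j)
          case 0 then show ?case by simp
        next
          case (Suc j)
          show ?case
          proof (cases "j = 0")
            case True then show ?thesis by simp
          next
            case False
            then have IH: "(?b, vs!j) \<in> ?R\<^sup>*" using Suc by simp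
            have e: "{vs!j, vs!(Suc j)} \<in> ?E" using vs(3)[rule_format, of j] Suc.prems by simp
            have "vs!(Suc j) \<noteq> ?a" using dist[of "Suc j" 0] Suc.prems vne by auto
            moreover have "vs!(Suc j) \<noteq> ?b" using dist[of "Suc j" 1] Suc.prems False vne by auto
            ultimately have "{vs!j, vs!(Suc j)} \<noteq> {?a,?b}" by (auto simp: doubleton_eq_iff)
            then have "(vs!j, vs!(Suc j)) \<in> ?R" using e by (simp add: Rel_def)
            then show ?thesis using IH by (rule rtrancl_into_rtrancl[rotated])
          qed
        qed
      qed
      have p1: "(?b, vs!(?n-1)) \<in> ?R\<^sup>*" using path[of "?n - 1"] vs(1) by simp
      have "Suc (?n - 1) = ?n" using vs(1) by simp
      then have sm: "Suc (?n - 1) mod ?n = 0" by simp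
      have e: "{vs!(?n-1), vs!0} \<in> ?E" using vs(3)[rule_format, of "?n - 1"] vs(1) sm by simp
      have "vs!(?n-1) \<noteq> ?a" using dist[of "?n-1" 0] vs(1) vne by auto
      moreover have "vs!(?n-1) \<noteq> ?b" using dist[of "?n-1" 1] vs(1) vne by auto
      ultimately have "{vs!(?n-1), vs!0} \<noteq> {?a,?b}" by (auto simp: doubleton_eq_iff)
      then have "(vs!(?n-1), ?a) \<in> ?R" using e by (simp add: Rel_def)
      then have "(?b, ?a) \<in> ?R\<^sup>*" using p1 by (rule rtrancl_into_rtrancl[rotated])
      then show False using Kf[OF ab] by blast
    qed
    have tree: "is_tree ?V ?E" unfolding is_tree_def using oneV conn2 nocyc by blast
    have even_cnt: "\<And>e w. e \<in> ?E \<Longrightarrow> w \<in> {u1,u2} \<Longrightarrow> even (cnt w e)"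
    proof -
      fix e w assume eE: "e \<in> ?E" and w: "w \<in> {u1,u2}"
      obtain p q where pq: "p \<noteq> q" "e = {p,q}"
        using eE edge_form[of e u1] edge_form[of e u2] assms(10,11) unfolding edges_pair_def by blast
      define C where "C = {v. (q,v) \<in> (Rel (?E - {{p,q}}))\<^sup>*}"
      have cl: "\<forall>v w. v \<in> C \<longrightarrow> {v,w} \<in> ?E - {{p,q}} \<longrightarrow> w \<in> C"
        unfolding C_def by (auto simp: Rel_def intro: rtrancl_into_rtrancl)
      have qC: "q \<in> C" unfolding C_def by simp
      have pC: "p \<notin> C" unfolding C_def using Kf eE pq by blast
      have "edges w \<subseteq> ?E" "w \<noteq> []" "hd w = last w" using w E1 E2 ne1 ne2 hl1 hl2 by auto
      then show "even (cnt w e)" using parity[OF cl qC pC] pq by simp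
    qed
    define g where "g = (\<lambda>e. if e = c then (4::nat) else 2)"
    have ev1: "\<And>e. e \<in> ?E \<Longrightarrow> even (cnt u1 e)" and ev2: "\<And>e. e \<in> ?E \<Longrightarrow> even (cnt u2 e)"
      using even_cnt by auto
    have cc1: "cnt u1 c \<ge> 2" using cnt_pos[OF c1] ev1[OF cE] by presburger
    have cc2: "cnt u2 c \<ge> 2" using cnt_pos[OF c2] ev2[OF cE] by presburger
    have gle: "\<forall>e\<in>?E. g e \<le> cnt u1 e + cnt u2 e" using ge2 cc1 cc2 by (auto simp: g_def)
    have "sum g ?E = (\<Sum>e\<in>?E. 2 + (if e = c then 2 else 0))"
      by (intro sum.cong) (auto simp: g_def)
    also have "\<dots> = (\<Sum>e\<in>?E. 2) + (\<Sum>e\<in>?E. (if e = c then 2 else 0))"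
      by (rule sum.distrib)
    also have "\<dots> = 2 * card ?E + 2" using finE cE by simp
    finally have sg: "sum g ?E = 2 * card ?E + 2" .
    have allg: "\<forall>e\<in>?E. cnt u1 e + cnt u2 e = g e"
      using sum_ge_eq[OF finE gle] sumN sg h by simp
    have r1: "\<forall>e\<in>edges u1. cnt u1 e = 2"
    proof
      fix e assume e: "e \<in> edges u1"
      then have "e \<in> ?E" using E1 by auto
      then have s: "cnt u1 e + cnt u2 e = (if e = c then 4 else 2)" and ev: "even (cnt u1 e)"
        using allg ev1 unfolding g_def by auto
      have p: "cnt u1 e \<ge> 1" using cnt_pos[OF e] .
      show "cnt u1 e = 2"
      proof (cases "e = c")
        case True then show ?thesis using s cc1 cc2 by auto
      next
        case False then have "cnt u1 e + cnt u2 e = 2" using s by simp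
        then show ?thesis using p ev by presburger
      qed
    qed
    have r2: "\<forall>e\<in>edges u2. cnt u2 e = 2"
    proof
      fix e assume e: "e \<in> edges u2"
      then have "e \<in> ?E" using E2 by auto
      then have s: "cnt u1 e + cnt u2 e = (if e = c then 4 else 2)" and ev: "even (cnt u2 e)"
        using allg ev2 unfolding g_def by auto
      have p: "cnt u2 e \<ge> 1" using cnt_pos[OF e] .
      show "cnt u2 e = 2"
      proof (cases "e = c")
        case True then show ?thesis using s cc1 cc2 by auto
      next
        case False then have "cnt u1 e + cnt u2 e = 2" using s by simp
        then show ?thesis using p ev by presburger
      qed
    qed
    show ?thesis using tree r1 r2 allg unfolding g_def by blast
  qed
  show ?thesis
  proof (intro conjI impI)
    show "wt_pair u1 u2 = 1 + card ?E \<or> wt_pair u1 u2 = card ?E" using wt le1 le2 by linarith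
  next
    assume "wt_pair u1 u2 = 1 + card ?E"
    then have B: "is_tree ?V ?E \<and> (\<forall>e\<in>edges u1. cnt u1 e = 2) \<and> (\<forall>e\<in>edges u2. cnt u2 e = 2)
      \<and> (\<forall>e\<in>?E. cnt u1 e + cnt u2 e = (if e = c then 4 else 2))" using caseB wt by simp
    show "is_tree ?V ?E" using B by blast
    show "\<forall>e\<in>edges u1. Ncount u1 e = 2" using B NC by simp
    show "\<forall>e\<in>edges u2. Ncount u2 e = 2" using B NC by simp
    show "\<exists>!e0. e0 \<in> ?E \<and> Ncount_pair u1 u2 e0 \<noteq> 2"
    proof (rule ex1I[of _ c])
      show "c \<in> ?E \<and> Ncount_pair u1 u2 c \<noteq> 2" using B cE NP by simp
    next
      fix e assume "e \<in> ?E \<and> Ncount_pair u1 u2 e \<noteq> 2"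
      then show "e = c" using B NP by (metis numeral_eq_iff semiring_norm(88))
    qed
    show "\<forall>e0\<in>?E. Ncount_pair u1 u2 e0 \<noteq> 2 \<longrightarrow> Ncount_pair u1 u2 e0 = 4" using B NP by auto
  next
    assume "wt_pair u1 u2 = card ?E"
    then have A: "(\<exists>e\<in>?E. cnt u1 e = 1) \<and> (\<exists>e\<in>?E. cnt u2 e = 1) \<and> (\<forall>e\<in>?E. cnt u1 e + cnt u2 e = 2)"
      using caseA wt by simp
    show "\<exists>e\<in>?E. Ncount u1 e = 1" using A NC by simp
    show "\<exists>e\<in>?E. Ncount u2 e = 1" using A NC by simp
    show "\<forall>e\<in>?E. Ncount_pair u1 u2 e = 2" using A NP by simp
  qed
qed

end
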